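(* Let $X$ be a compact metric space and $f:X\to X$ a continuous minimal map. Let $D=\{\dots,x_{-2},x_{-1},x_0,x_1,x_2,\dots\}\subseteq X$ be such that $f(x_n)=x_{n+1}$ for every integer $n$. Suppose that some point of $D$ has more than one $f$-preimage in $X$ (equivalently, an $f$-preimage in $X\setminus D$). Then $(f|_D)^{-1}$ is not continuous, i.e., there is no continuous map $g:D\to D$ with $g(f(x))=x$ and $f(g(x))=x$ for all $x\in D$.
   Context: A continuous selfmap of a compact metric space is minimal if every forward orbit is dense (equivalently, there is no proper nonempty closed invariant subset). *)

theory Defs
  imports "HOL-Analysis.Analysis"
begin

definition minimal_map :: "'a::metric_space set \<Rightarrow> ('a \<Rightarrow> 'a) \<Rightarrow> bool" where
  "minimal_map X f \<longleftrightarrow>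
     f ` X \<subseteq> X \<and> continuous_on X f \<and>
     (\<forall>x\<in>X. X \<subseteq> closure {(f ^^ n) x | n. True})"

end

theory Submission
  imports Defs
begin

lemma orbit_x:
  fixes f :: "'a \<Rightarrow> 'a" and x :: "int \<Rightarrow> 'a"
  assumes "\<And>n. f (x n) = x (n + 1)"
  shows "(f ^^ n) (x 0) = x (int n)"
  by (induction n) (auto simp: assms add.commute)

theorem lemma3:
  fixes X :: "'a::metric_space set" and f :: "'a \<Rightarrow> 'a" and x :: "int \<Rightarrow> 'a"
  assumes "compact X"
    and "continuous_on X f"
    and "f ` X \<subseteq> X"
    and "minimal_map X f"
    and "\<And>n. x n \<in> X"
    and "\<And>n. f (x n) = x (n + 1)"
    and "\<exists>d\<in>range x. \<exists>y\<in>X. \<exists>z\<in>X. y \<noteq> z \<and> f y = d \<and> f z = d"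
  shows "\<not> (\<exists>g. continuous_on (range x) g \<and> g ` range x \<subseteq> range x \<and>
              (\<forall>p\<in>range x. g (f p) = p \<and> f (g p) = p))"
proof
  assume "\<exists>g. continuous_on (range x) g \<and> g ` range x \<subseteq> range x \<and>
              (\<forall>p\<in>range x. g (f p) = p \<and> f (g p) = p)"
  then obtain g where gc: "continuous_on (range x) g" and gi: "\<forall>p\<in>range x. g (f p) = p" by blast
  obtain k y z where yz: "y \<in> X" "z \<in> X" "y \<noteq> z" "f y = x k" "f z = x k"
    using assms(7) by blast
  obtain w where w: "w \<in> X" "f w = x k" "w \<noteq> x (k - 1)"
    using yz by metis
  have sub: "{(f ^^ n) (x 0) | n. True} \<subseteq> range x"
    using orbit_x[of f x, OF assms(6)] by auto
  have "X \<subseteq> closure {(f ^^ n) (x 0) | n. True}"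
    using assms(4) assms(5)[of 0] unfolding minimal_map_def by blast
  with sub w(1) have "w \<in> closure (range x)" using closure_mono by blast
  then obtain s where s: "\<And>n. s n \<in> range x" "s \<longlonglongrightarrow> w"
    using closure_sequential by blast
  have sX: "\<And>n. s n \<in> X" using s(1) assms(5) by (metis imageE)
  have "(\<lambda>n. f (s n)) \<longlonglongrightarrow> f w"
    by (rule continuous_on_tendsto_compose[OF assms(2) s(2) w(1)]) (simp add: sX)
  hence t1: "(\<lambda>n. f (s n)) \<longlonglongrightarrow> x k" using w(2) by simp
  have fsr: "\<And>n. (f \<circ> s) n \<in> range x"
  proof -
    fix n obtain m where "s n = x m" using s(1)[of n] by blast
    thus "(f \<circ> s) n \<in> range x" by (simp add: assms(6))
  qed
  have "(\<lambda>n. g ((f \<circ> s) n)) \<longlonglongrightarrow> g (x k)"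
    by (rule continuous_on_tendsto_compose[OF gc t1[folded comp_def]]) (use fsr in \<open>auto simp: comp_def\<close>)
  moreover have "(\<lambda>n. g ((f \<circ> s) n)) = s" proof
    fix n obtain m where "s n = x m" using s(1)[of n] by blast
    thus "g ((f \<circ> s) n) = s n" using gi by simp
  qed
  moreover have "g (x k) = x (k - 1)"
    using gi[rule_format, OF rangeI[of x "k-1"]] assms(6)[of "k-1"] by simp
  ultimately have "s \<longlonglongrightarrow> x (k - 1)" by simp
  with s(2) have "w = x (k - 1)" using LIMSEQ_unique by blast
  with w(3) show False by simp
qed

end
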